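(* Let $\beta>1$, $l\in(-1,0]$, $r=l+1$, and let $d$ be the $(-\beta,l)$-expansion. If every rational number $x\in[l,r)$ has eventually periodic $(-\beta,l)$-expansion $d(x)$, then $\beta$ is either a Pisot number or a Salem number.
   Context: For $\beta>1$ and $l\in(-1,0]$, $r=l+1$, the $(-\beta,l)$-transformation is $T:[l,r)\to[l,r)$, $T(x)=-\beta x-\lfloor -\beta x-l\rfloor$. The $(-\beta,l)$-expansion of $x\in[l,r)$ is the integer sequence $d(x)=x_1x_2x_3\cdots$ with $x_i=\lfloor -\beta T^{i-1}(x)-l\rfloor$. A Pisot number is a real algebraic integer $>1$ all of whose other conjugates have modulus $<1$; a Salem number is a real algebraic integer $>1$ all of whose other conjugates have modulus $\le1$, with at least one conjugate of modulus exactly $1$. *)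

theory Defs
  imports "HOL-Analysis.Analysis" "HOL-Computational_Algebra.Computational_Algebra"
begin

definition negbeta_T :: "real \<Rightarrow> real \<Rightarrow> real \<Rightarrow> real" where
  "negbeta_T \<beta> l x = - \<beta> * x - of_int \<lfloor>- \<beta> * x - l\<rfloor>"

text \<open>Digit sequence of the (-beta,l)-expansion; index n (from 0) is the digit x_(n+1).\<close>
definition negbeta_digits :: "real \<Rightarrow> real \<Rightarrow> real \<Rightarrow> nat \<Rightarrow> int" where
  "negbeta_digits \<beta> l x n = \<lfloor>- \<beta> * ((negbeta_T \<beta> l ^^ n) x) - l\<rfloor>"

definition eventually_periodic :: "(nat \<Rightarrow> 'a) \<Rightarrow> bool" where
  "eventually_periodic s \<longleftrightarrow> (\<exists>N p. p > 0 \<and> (\<forall>n\<ge>N. s (n + p) = s n))"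

definition conjugates :: "real \<Rightarrow> complex set" where
  "conjugates \<beta> = {z. \<exists>p :: int poly. lead_coeff p = 1 \<and> irreducible p \<and>
      poly (map_poly of_int p) (complex_of_real \<beta>) = 0 \<and> poly (map_poly of_int p) z = 0}"

definition pisot :: "real \<Rightarrow> bool" where
  "pisot \<beta> \<longleftrightarrow> algebraic_int \<beta> \<and> \<beta> > 1 \<and>
     (\<forall>z \<in> conjugates \<beta> - {complex_of_real \<beta>}. cmod z < 1)"

definition salem :: "real \<Rightarrow> bool" where
  "salem \<beta> \<longleftrightarrow> algebraic_int \<beta> \<and> \<beta> > 1 \<and>
     (\<forall>z \<in> conjugates \<beta> - {complex_of_real \<beta>}. cmod z \<le> 1) \<and>
     (\<exists>z \<in> conjugates \<beta> - {complex_of_real \<beta>}. cmod z = 1)"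

end

theory Submission imports Defs begin

lemma mp_add: "map_poly (of_int::int\<Rightarrow>'a::comm_ring_1) (p + q) = map_poly of_int p + map_poly of_int q"
  by (intro poly_eqI) (simp add: coeff_map_poly)
lemma mp_diff: "map_poly (of_int::int\<Rightarrow>'a::comm_ring_1) (p - q) = map_poly of_int p - map_poly of_int q"
  by (intro poly_eqI) (simp add: coeff_map_poly)
lemma mp_uminus: "map_poly (of_int::int\<Rightarrow>'a::comm_ring_1) (- p) = - map_poly of_int p"
  by (intro poly_eqI) (simp add: coeff_map_poly)
lemma mp_mult: "map_poly (of_int::int\<Rightarrow>'a::comm_ring_1) (p * q) = map_poly of_int p * map_poly of_int q"
  by (intro poly_eqI) (simp add: coeff_map_poly coeff_mult)
lemma mp_smult: "map_poly (of_int::int\<Rightarrow>'a::comm_ring_1) (smult c p) = smult (of_int c) (map_poly of_int p)"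
  by (intro poly_eqI) (simp add: coeff_map_poly)
lemma mp_pCons: "map_poly (of_int::int\<Rightarrow>'a::comm_ring_1) (pCons c p) = pCons (of_int c) (map_poly of_int p)"
  by (simp add: map_poly_pCons)
lemma mp_monom: "map_poly (of_int::int\<Rightarrow>'a::comm_ring_1) (monom c n) = monom (of_int c) n"
  by (simp add: map_poly_monom)

lemma minpoly_deg:
  fixes p :: "int poly" and z :: complex
  assumes lc: "lead_coeff p = 1" and irr: "irreducible p" and pz: "poly (map_poly of_int p) z = 0"
  shows "g \<noteq> 0 \<Longrightarrow> poly (map_poly of_int g) z = 0 \<Longrightarrow> degree p \<le> degree g"
proof (induction "degree g" arbitrary: g rule: less_induct)
  case less
  show ?case
  proof (rule ccontr)
    assume dl: "\<not> degree p \<le> degree g"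
    obtain q r where qr: "pseudo_divmod p g = (q, r)" by fastforce
    define c where "c = coeff g (degree g) ^ (Suc (degree p) - degree g)"
    have c0: "c \<noteq> 0" using less.prems(1) by (simp add: c_def)
    have eq: "smult c p = g * q + r" using pseudo_divmod(1)[OF less.prems(1) qr] by (simp add: c_def)
    have rr: "r = 0 \<or> degree r < degree g" using pseudo_divmod(2)[OF less.prems(1) qr] .
    have "poly (map_poly of_int (smult c p)) z = poly (map_poly of_int (g * q + r)) z"
      by (simp only: eq)
    hence rz: "poly (map_poly of_int r) z = 0"
      using pz less.prems(2) by (simp add: mp_smult mp_add mp_mult)
    have r0: "r = 0"
    proof (rule ccontr)
      assume "r \<noteq> 0"
      with rr have "degree r < degree g" by auto
      from less.hyps[OF this \<open>r \<noteq> 0\<close> rz] this dl show False by simp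
    qed
    have pr: "prime_elem p" by (rule irreducible_imp_prime_poly[OF irr])
    have "p dvd g * q" using eq r0 by (metis add.right_neutral dvd_smult dvd_refl)
    hence "p dvd g \<or> p dvd q" using pr by (simp add: prime_elem_dvd_mult_iff)
    thus False
    proof
      assume "p dvd g"
      hence "degree p \<le> degree g" using less.prems(1) by (simp add: dvd_imp_degree_le)
      with dl show False by simp
    next
      assume "p dvd q"
      then obtain s where s: "q = p * s" by (auto elim: dvdE)
      have p0: "p \<noteq> 0" using lc by auto
      have "[:c:] * p = (g * s) * p" using eq r0 s by (simp add: ac_simps)
      hence "[:c:] = g * s" using p0 mult_cancel_right by metis
      hence "degree (g * s) = 0" by (metis degree_pCons_0)
      moreover have "s \<noteq> 0" using \<open>[:c:] = g * s\<close> c0 by auto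
      ultimately have "degree g = 0" using less.prems(1) by (simp add: degree_mult_eq)
      then obtain g0 where "g = [:g0:]" by (metis degree_eq_zeroE)
      with less.prems show False by (simp add: mp_pCons)
    qed
  qed
qed

lemma minpoly_dvd:
  fixes p R :: "int poly" and z :: complex
  assumes lc: "lead_coeff p = 1" and irr: "irreducible p" and pz: "poly (map_poly of_int p) z = 0"
    and Rz: "poly (map_poly of_int R) z = 0"
  shows "p dvd R"
proof -
  have p0: "p \<noteq> 0" using lc by auto
  obtain q r where qr: "pseudo_divmod R p = (q, r)" by fastforce
  have eq: "R = p * q + r" using pseudo_divmod(1)[OF p0 qr] lc by simp
  have rr: "r = 0 \<or> degree r < degree p" using pseudo_divmod(2)[OF p0 qr] .
  have "poly (map_poly of_int R) z = poly (map_poly of_int (p * q + r)) z" by (simp only: eq)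
  hence rz: "poly (map_poly of_int r) z = 0" using pz Rz by (simp add: mp_add mp_mult)
  have "r = 0"
  proof (rule ccontr)
    assume "r \<noteq> 0"
    with minpoly_deg[OF lc irr pz this rz] rr show False by simp
  qed
  thus ?thesis using eq by simp
qed


primrec Ap :: "(nat \<Rightarrow> int) \<Rightarrow> nat \<Rightarrow> int poly" where
  "Ap ds 0 = 0" | "Ap ds (Suc n) = pCons (ds n) (- Ap ds n)"

definition U :: "(nat \<Rightarrow> int) \<Rightarrow> real \<Rightarrow> nat \<Rightarrow> 'a::real_field \<Rightarrow> 'a" where
  "U ds x n t = (-t)^n * of_real x - poly (map_poly of_int (Ap ds n)) t"

lemma U_0: "U ds x 0 t = of_real x" by (simp add: U_def)

lemma U_Suc: "U ds x (Suc n) t = - t * U ds x n t - of_int (ds n)"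
  by (simp add: U_def mp_pCons mp_uminus algebra_simps)

lemma coeff_Ap: "n \<le> j \<Longrightarrow> coeff (Ap ds n) j = 0"
proof (induction n arbitrary: j)
  case (Suc n)
  then obtain j' where "j = Suc j'" "n \<le> j'" by (cases j) auto
  thus ?case using Suc.IH by (simp add: coeff_pCons)
qed simp

definition Qp :: "int \<Rightarrow> int \<Rightarrow> (nat \<Rightarrow> int) \<Rightarrow> nat \<Rightarrow> int poly" where
  "Qp a b ds n = smult a (monom ((-1)^n) n) - smult b (Ap ds n)"

lemma poly_Qp:
  assumes "(of_real x :: 'a::real_field) = of_int a / of_int b" "b \<noteq> 0"
  shows "poly (map_poly of_int (Qp a b ds n)) (t::'a) = of_int b * U ds x n t"
proof -
  have "of_int b * U ds x n t = of_int b * ((-t)^n * (of_int a / of_int b)) - of_int b * poly (map_poly of_int (Ap ds n)) t"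
    by (simp add: U_def assms(1) algebra_simps)
  also have "of_int b * ((-t)^n * (of_int a / of_int b)) = of_int a * ((-1)^n * t^n)"
    using assms(2) by (simp add: power_minus[of t])
  finally show ?thesis by (simp add: Qp_def mp_diff mp_smult mp_monom poly_monom)
qed

lemma U_partial:
  assumes "t \<noteq> 0"
  shows "(\<Sum>i<n. of_int (ds i) * (- inverse t)^Suc i) = of_real x - (- inverse t)^n * U ds x n t"
proof (induction n)
  case 0 thus ?case by (simp add: U_0)
next
  case (Suc n)
  have "(- inverse t)^Suc n * U ds x (Suc n) t = (- inverse t)^n * ((- inverse t) * (- t)) * U ds x n t
      - of_int (ds n) * (- inverse t)^Suc n"
    by (simp add: U_Suc algebra_simps)
  also have "(- inverse t) * (- t) = 1" using assms by simp
  finally show ?case using Suc.IH by simp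
qed

lemma transfer:
  fixes p :: "int poly" and z0 \<gamma> :: complex
  assumes lc: "lead_coeff p = 1" and irr: "irreducible p" and pz: "poly (map_poly of_int p) z0 = 0"
    and pg: "poly (map_poly of_int p) \<gamma> = 0"
    and x: "(of_real x :: complex) = of_int a / of_int b" "b \<noteq> 0"
    and eq: "U ds x m z0 = U ds x n z0"
  shows "U ds x m \<gamma> = U ds x n \<gamma>"
proof -
  define R where "R = Qp a b ds m - Qp a b ds n"
  have "poly (map_poly of_int R) z0 = of_int b * U ds x m z0 - of_int b * U ds x n z0"
    by (simp add: R_def mp_diff poly_Qp[OF x])
  hence "poly (map_poly of_int R) z0 = 0" using eq by simp
  from minpoly_dvd[OF lc irr pz this] obtain s where "R = p * s" by (auto elim: dvdE)
  hence "poly (map_poly of_int R) \<gamma> = 0" using pg by (simp add: mp_mult)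
  hence "of_int b * (U ds x m \<gamma> - U ds x n \<gamma>) = 0"
    by (simp add: R_def mp_diff poly_Qp[OF x] algebra_simps)
  thus ?thesis using x(2) by simp
qed


context
  fixes \<beta> l :: real
  assumes b1: "\<beta> > 1" and l1: "-1 < l" and l0: "l \<le> 0"
begin

abbreviation "TT \<equiv> negbeta_T \<beta> l"
abbreviation "dg \<equiv> negbeta_digits \<beta> l"

lemma T_range: "l \<le> TT y \<and> TT y < l + 1"
proof -
  have "of_int \<lfloor>- \<beta> * y - l\<rfloor> \<le> - \<beta> * y - l" "- \<beta> * y - l < of_int \<lfloor>- \<beta> * y - l\<rfloor> + 1"
    by linarith+
  thus ?thesis unfolding negbeta_T_def by linarith
qed

lemma Tn_range: "l \<le> y \<Longrightarrow> y < l + 1 \<Longrightarrow> l \<le> (TT^^n) y \<and> (TT^^n) y < l + 1"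
  by (cases n) (auto simp: T_range)

lemma T_step: "(TT^^Suc n) y = - \<beta> * (TT^^n) y - of_int (dg y n)"
  by (simp add: negbeta_T_def negbeta_digits_def)

lemma dg_shift: "dg ((TT^^m) y) n = dg y (n + m)"
  by (simp add: negbeta_digits_def funpow_add)

lemma dg_bound: assumes "l \<le> y" "y < l + 1" shows "\<bar>real_of_int (dg y n)\<bar> \<le> \<beta> + 2"
proof -
  have r: "l \<le> (TT^^n) y \<and> (TT^^n) y < l + 1" using Tn_range assms by blast
  define u where "u = (TT^^n) y"
  have "\<bar>u\<bar> \<le> 1" using r l1 l0 unfolding u_def by auto
  hence "\<bar>\<beta> * u\<bar> \<le> \<beta>" using b1 by (simp add: abs_mult mult_left_le)
  hence "\<bar>- \<beta> * u - l\<bar> \<le> \<beta> + 1" using l1 l0 by linarith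
  moreover have "real_of_int (dg y n) = of_int \<lfloor>- \<beta> * u - l\<rfloor>" by (simp add: negbeta_digits_def u_def)
  moreover have "\<bar>real_of_int \<lfloor>- \<beta> * u - l\<rfloor> - (- \<beta> * u - l)\<bar> \<le> 1" by linarith
  ultimately show ?thesis by linarith
qed

lemma T_diff: "(\<forall>i<n. dg y i = dg y' i) \<Longrightarrow> (TT^^n) y - (TT^^n) y' = (-\<beta>)^n * (y - y')"
proof (induction n)
  case (Suc n)
  hence "(TT^^n) y - (TT^^n) y' = (-\<beta>)^n * (y - y')" by auto
  moreover have "dg y n = dg y' n" using Suc.prems by auto
  have e: "(TT^^Suc n) y - (TT^^Suc n) y' = -\<beta>*((TT^^n) y - (TT^^n) y')"
    unfolding T_step using \<open>dg y n = dg y' n\<close> by (simp add: algebra_simps)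
  show ?case unfolding e using \<open>(TT^^n) y - (TT^^n) y' = (-\<beta>)^n * (y - y')\<close> by simp
qed simp

lemma uniq:
  assumes "l \<le> y" "y < l + 1" "l \<le> y'" "y' < l + 1" "\<forall>i. dg y i = dg y' i"
  shows "y = y'"
proof (rule ccontr)
  assume ne: "y \<noteq> y'"
  hence pos: "\<bar>y - y'\<bar> > 0" by simp
  obtain n where n: "1 / \<bar>y - y'\<bar> < \<beta> ^ n" using real_arch_pow[OF b1] by blast
  have "(TT^^n) y - (TT^^n) y' = (-\<beta>)^n * (y - y')" using T_diff assms(5) by blast
  hence "\<bar>(TT^^n) y - (TT^^n) y'\<bar> = \<beta>^n * \<bar>y - y'\<bar>" using b1 by (simp add: abs_mult power_abs)
  moreover have "\<bar>(TT^^n) y - (TT^^n) y'\<bar> < 1" using Tn_range[OF assms(1,2), of n] Tn_range[OF assms(3,4), of n] by linarith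
  moreover have "1 < \<beta>^n * \<bar>y - y'\<bar>" using n pos by (simp add: field_simps)
  ultimately show False by linarith
qed

lemma orbit_periodic:
  assumes "l \<le> x" "x < l + 1" "p > 0" "\<forall>n\<ge>N. dg x (n + p) = dg x n" "n \<ge> N"
  shows "(TT^^(n + p)) x = (TT^^n) x"
proof (rule uniq)
  show "l \<le> (TT^^(n + p)) x" "(TT^^(n + p)) x < l + 1" "l \<le> (TT^^n) x" "(TT^^n) x < l + 1"
    using Tn_range[OF assms(1,2)] by blast+
  show "\<forall>i. dg ((TT^^(n + p)) x) i = dg ((TT^^n) x) i"
  proof
    fix i
    have "dg ((TT^^(n + p)) x) i = dg x (i + n + p)" by (simp add: dg_shift add.assoc)
    also have "\<dots> = dg x (i + n)" using assms(4,5) by auto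
    also have "\<dots> = dg ((TT^^n) x) i" by (simp add: dg_shift)
    finally show "dg ((TT^^(n + p)) x) i = dg ((TT^^n) x) i" .
  qed
qed

lemma count_pre: "countable C \<Longrightarrow> countable {y. TT y \<in> C}"
proof -
  assume C: "countable C"
  have "{y. TT y \<in> C} \<subseteq> (\<lambda>(u, k). - (u + of_int k) / \<beta>) ` (C \<times> (UNIV :: int set))"
  proof
    fix y assume "y \<in> {y. TT y \<in> C}"
    hence "TT y \<in> C" by simp
    moreover have "y = - (TT y + of_int \<lfloor>- \<beta> * y - l\<rfloor>) / \<beta>" using b1
      by (simp add: negbeta_T_def field_simps)
    ultimately show "y \<in> (\<lambda>(u, k). - (u + of_int k) / \<beta>) ` (C \<times> (UNIV :: int set))"
      by (intro image_eqI[where x="(TT y, \<lfloor>- \<beta> * y - l\<rfloor>)"]) auto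
  qed
  moreover have "countable ((\<lambda>(u, k). - (u + of_int k) / \<beta>) ` (C \<times> (UNIV :: int set)))"
    using C by auto
  ultimately show ?thesis by (rule countable_subset)
qed

lemma count_pre_n: "countable C \<Longrightarrow> countable {y. (TT^^n) y \<in> C}"
proof (induction n arbitrary: C)
  case 0 thus ?case by simp
next
  case (Suc n)
  have eq: "{y. (TT^^Suc n) y \<in> C} = {y. TT y \<in> {u. (TT^^n) u \<in> C}}"
    by (simp add: funpow_Suc_right del: funpow.simps)
  have "countable {y. TT y \<in> {u. (TT^^n) u \<in> C}}" by (rule count_pre) (rule Suc.IH[OF Suc.prems])
  thus ?case by (simp only: eq)
qed

lemma generic_exists: "\<exists>y. 0 < y \<and> y < l + 1 \<and> (\<forall>n. (TT^^Suc n) y \<noteq> l)"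
proof -
  have c: "countable (\<Union>n. {y. (TT^^Suc n) y \<in> {l}})"
    by (intro countable_UN count_pre_n) auto
  have u: "uncountable {0<..<l+1}" using l1 by (simp add: uncountable_open_interval)
  have "\<not> {0<..<l+1} \<subseteq> (\<Union>n. {y. (TT^^Suc n) y \<in> {l}})"
    using c u countable_subset by blast
  thus ?thesis by auto
qed


lemma ev_from_cont:
  assumes gen: "\<forall>n. (TT^^Suc n) y0 \<noteq> l" and ct: "((\<lambda>y. (TT^^j) y) \<longlongrightarrow> (TT^^j) y0) (at y0)"
  shows "eventually (\<lambda>y. dg y j = dg y0 j) (at y0)"
proof -
  define z0 where "z0 = -\<beta> * (TT^^j) y0 - l"
  have zt: "((\<lambda>y. -\<beta> * (TT^^j) y - l) \<longlongrightarrow> z0) (at y0)" using ct unfolding z0_def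
    by (intro tendsto_intros)
  have d: "dg y0 j = \<lfloor>z0\<rfloor>" by (simp add: negbeta_digits_def z0_def)
  have ni: "z0 \<noteq> of_int \<lfloor>z0\<rfloor>"
  proof
    assume h: "z0 = of_int \<lfloor>z0\<rfloor>"
    have "(TT^^Suc j) y0 = -\<beta> * (TT^^j) y0 - of_int (dg y0 j)" by (rule T_step)
    also have "\<dots> = l" using h by (simp add: d z0_def)
    finally show False using gen by blast
  qed
  have lt1: "of_int \<lfloor>z0\<rfloor> < z0" using ni by linarith
  have lt2: "z0 < of_int \<lfloor>z0\<rfloor> + 1" by linarith
  have e1: "eventually (\<lambda>y. of_int \<lfloor>z0\<rfloor> < -\<beta> * (TT^^j) y - l) (at y0)"
    using order_tendstoD(1)[OF zt lt1] .
  have e2: "eventually (\<lambda>y. -\<beta> * (TT^^j) y - l < of_int \<lfloor>z0\<rfloor> + 1) (at y0)"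
    using order_tendstoD(2)[OF zt lt2] .
  show ?thesis using e1 e2
  proof eventually_elim
    case (elim y)
    hence "\<lfloor>-\<beta> * (TT^^j) y - l\<rfloor> = \<lfloor>z0\<rfloor>" by (intro floor_unique) auto
    thus ?case using d unfolding negbeta_digits_def by metis
  qed
qed

lemma cont_all:
  assumes gen: "\<forall>n. (TT^^Suc n) y0 \<noteq> l"
  shows "((\<lambda>y. (TT^^j) y) \<longlongrightarrow> (TT^^j) y0) (at y0)"
proof (induction j)
  case 0 thus ?case by simp
next
  case (Suc j)
  have ev: "eventually (\<lambda>y. dg y j = dg y0 j) (at y0)" by (rule ev_from_cont[OF gen Suc.IH])
  have t: "((\<lambda>y. -\<beta> * (TT^^j) y - of_int (dg y0 j)) \<longlongrightarrow> -\<beta> * (TT^^j) y0 - of_int (dg y0 j)) (at y0)"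
    using Suc.IH by (intro tendsto_intros)
  have ev2: "eventually (\<lambda>y. -\<beta> * (TT^^j) y - of_int (dg y0 j) = (TT^^Suc j) y) (at y0)"
    using ev by eventually_elim (simp only: T_step)
  have "((\<lambda>y. (TT^^Suc j) y) \<longlongrightarrow> -\<beta> * (TT^^j) y0 - of_int (dg y0 j)) (at y0)"
    by (rule Lim_transform_eventually[OF t ev2])
  thus ?case by (simp only: T_step)
qed

lemma ev_all:
  assumes gen: "\<forall>n. (TT^^Suc n) y0 \<noteq> l"
  shows "eventually (\<lambda>y. \<forall>j<k. dg y j = dg y0 j) (at y0)"
proof -
  have "eventually (\<lambda>y. \<forall>j\<in>{..<k}. dg y j = dg y0 j) (at y0)"
    by (rule eventually_ball_finite) (auto intro: ev_from_cont[OF gen cont_all[OF gen]])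
  thus ?thesis by (rule eventually_mono) simp
qed


lemma U_orbit: "of_real ((TT^^n) x) = U (dg x) x n (of_real \<beta> :: 'a::real_field)"
proof (induction n)
  case 0 thus ?case by (simp add: U_0)
next
  case (Suc n)
  show ?case unfolding T_step U_Suc Suc.IH[symmetric] by simp
qed

lemma sums_rat:
  fixes p :: "int poly" and \<gamma> :: complex
  assumes hyp: "\<forall>x\<in>\<rat>. l \<le> x \<and> x < l + 1 \<longrightarrow> eventually_periodic (dg x)"
    and lc: "lead_coeff p = 1" and irr: "irreducible p"
    and pz: "poly (map_poly of_int p) (complex_of_real \<beta>) = 0"
    and pg: "poly (map_poly of_int p) \<gamma> = 0" and g1: "norm \<gamma> > 1"
    and x: "x \<in> \<rat>" "l \<le> x" "x < l + 1"
  shows "(\<lambda>i. of_int (dg x i) * (- inverse \<gamma>)^Suc i) sums (of_real x)"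
proof -
  obtain N q where q: "q > 0" "\<forall>n\<ge>N. dg x (n + q) = dg x n"
    using hyp x unfolding eventually_periodic_def by blast
  obtain a b where ab: "b > 0" "x = of_int a / of_int b" using Rats_cases'[OF x(1)] by blast
  have xc: "(of_real x :: complex) = of_int a / of_int b" by (simp add: ab)
  have per: "U (dg x) x (n + q) \<gamma> = U (dg x) x n \<gamma>" if "n \<ge> N" for n
  proof (rule transfer[OF lc irr pz pg xc])
    show "b \<noteq> 0" using ab by simp
    have "(TT^^(n + q)) x = (TT^^n) x" by (rule orbit_periodic[OF x(2,3) q that])
    hence "(of_real ((TT^^(n + q)) x) :: complex) = of_real ((TT^^n) x)" by simp
    thus "U (dg x) x (n + q) (complex_of_real \<beta>) = U (dg x) x n (complex_of_real \<beta>)"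
      by (simp only: U_orbit)
  qed
  define B where "B = (\<Sum>k<N+q. norm (U (dg x) x k \<gamma>))"
  have red: "\<exists>k<N+q. U (dg x) x n \<gamma> = U (dg x) x k \<gamma>" for n
  proof (induction n rule: less_induct)
    case (less n)
    show ?case
    proof (cases "n < N + q")
      case True thus ?thesis by blast
    next
      case False
      define m where "m = n - q"
      have m: "n = m + q" "m \<ge> N" using False by (simp_all add: m_def)
      have "m < n" using m q by simp
      from less.IH[OF this] obtain k where "k < N + q" "U (dg x) x m \<gamma> = U (dg x) x k \<gamma>" by blast
      thus ?thesis using per[OF m(2)] m(1) by metis
    qed
  qed
  have bnd: "norm (U (dg x) x n \<gamma>) \<le> B" for n
  proof -
    obtain k where k: "k < N + q" "U (dg x) x n \<gamma> = U (dg x) x k \<gamma>" using red by blast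
    have "norm (U (dg x) x k \<gamma>) \<le> B" unfolding B_def
      by (rule member_le_sum) (use k in auto)
    thus ?thesis using k by simp
  qed
  define w where "w = - inverse \<gamma>"
  have nw: "norm w < 1" using g1 by (simp add: w_def norm_inverse inverse_less_1_iff)
  have g0: "\<gamma> \<noteq> 0" using g1 by auto
  have lim0: "((\<lambda>n. norm w ^ n * B) \<longlongrightarrow> 0) sequentially"
    using LIMSEQ_power_zero[of "norm w"] nw by (auto intro: tendsto_mult_left_zero)
  have lim: "((\<lambda>n. w^n * U (dg x) x n \<gamma>) \<longlongrightarrow> 0) sequentially"
  proof (rule Lim_null_comparison[OF _ lim0])
    show "\<forall>\<^sub>F n in sequentially. norm (w ^ n * U (dg x) x n \<gamma>) \<le> norm w ^ n * B"
    proof (rule always_eventually, rule allI)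
      fix n
      have "norm (w ^ n * U (dg x) x n \<gamma>) = norm w ^ n * norm (U (dg x) x n \<gamma>)"
        by (simp add: norm_mult norm_power)
      also have "\<dots> \<le> norm w ^ n * B" by (rule mult_left_mono[OF bnd]) simp
      finally show "norm (w ^ n * U (dg x) x n \<gamma>) \<le> norm w ^ n * B" .
    qed
  qed
  have "((\<lambda>n. of_real x - w^n * U (dg x) x n \<gamma>) \<longlongrightarrow> of_real x - 0) sequentially"
    by (intro tendsto_intros lim)
  moreover have "(\<lambda>n. of_real x - w^n * U (dg x) x n \<gamma>) = (\<lambda>n. \<Sum>i<n. of_int (dg x i) * w^Suc i)"
    using U_partial[OF g0] by (simp add: w_def)
  ultimately show ?thesis unfolding sums_def w_def by simp
qed

lemma summ:
  fixes w :: complex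
  assumes "l \<le> y" "y < l + 1" "norm w < 1"
  shows "summable (\<lambda>i. of_int (dg y i) * w^Suc i)"
proof (rule summable_comparison_test')
  show "summable (\<lambda>i. (\<beta> + 2) * norm w * norm w ^ i)"
    using assms(3) by (intro summable_mult summable_geometric) simp
  show "norm (of_int (dg y i) * w^Suc i) \<le> (\<beta> + 2) * norm w * norm w ^ i" for i
  proof -
    have "norm (of_int (dg y i) * w^Suc i) = \<bar>real_of_int (dg y i)\<bar> * (norm w * norm w ^ i)"
      by (simp add: norm_mult norm_power)
    also have "\<dots> \<le> (\<beta> + 2) * (norm w * norm w ^ i)"
      by (rule mult_right_mono[OF dg_bound[OF assms(1,2)]]) simp
    finally show ?thesis by (simp add: mult.assoc)
  qed
qed

lemma tail:
  fixes w :: complex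
  assumes y: "l \<le> y" "y < l + 1" and y': "l \<le> y'" "y' < l + 1" and nw: "norm w < 1"
    and eq: "\<forall>j<k. dg y j = dg y' j"
  shows "norm ((\<Sum>i. of_int (dg y i) * w^Suc i) - (\<Sum>i. of_int (dg y' i) * w^Suc i))
         \<le> 2 * (\<beta> + 2) * norm w ^ k / (1 - norm w)"
proof -
  define g where "g i = of_int (dg y i) * w^Suc i - of_int (dg y' i) * w^Suc i" for i
  have "g sums ((\<Sum>i. of_int (dg y i) * w^Suc i) - (\<Sum>i. of_int (dg y' i) * w^Suc i))"
    unfolding g_def by (intro sums_diff summable_sums summ y y' nw)
  from sums_split_initial_segment[OF this, of k]
  have s: "(\<lambda>i. g (i + k)) sums ((\<Sum>i. of_int (dg y i) * w^Suc i) - (\<Sum>i. of_int (dg y' i) * w^Suc i))"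
    using eq by (simp add: g_def)
  define K where "K = 2 * (\<beta> + 2) * norm w ^ k"
  have gb: "norm (g (i + k)) \<le> K * norm w ^ i" for i
  proof -
    have "norm (g (i + k)) = \<bar>real_of_int (dg y (i+k)) - of_int (dg y' (i+k))\<bar> * norm w ^ Suc (i + k)"
    proof -
      have nd: "norm (complex_of_int a - of_int b) = \<bar>real_of_int a - of_int b\<bar>" for a b
        by (metis norm_of_int of_int_diff)
      show ?thesis by (simp add: g_def norm_mult norm_power nd flip: left_diff_distrib)
    qed
    also have "\<dots> \<le> (2 * (\<beta> + 2)) * norm w ^ Suc (i + k)"
      using dg_bound[OF y, of "i+k"] dg_bound[OF y', of "i+k"]
      by (intro mult_right_mono) auto
    also have "norm w ^ Suc (i + k) \<le> norm w ^ (i + k)"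
      using nw by (intro power_decreasing) auto
    hence "(2 * (\<beta> + 2)) * norm w ^ Suc (i + k) \<le> (2 * (\<beta> + 2)) * norm w ^ (i + k)"
      using b1 by (intro mult_left_mono) auto
    finally show ?thesis by (simp add: K_def power_add mult_ac)
  qed
  have sK: "summable (\<lambda>i. K * norm w ^ i)" using nw by (intro summable_mult summable_geometric) simp
  have sn: "summable (\<lambda>i. norm (g (i + k)))"
    by (rule summable_comparison_test'[OF sK]) (use gb in simp)
  have "norm ((\<Sum>i. of_int (dg y i) * w^Suc i) - (\<Sum>i. of_int (dg y' i) * w^Suc i)) = norm (\<Sum>i. g (i + k))"
    using s by (simp add: sums_iff)
  also have "\<dots> \<le> (\<Sum>i. norm (g (i + k)))" by (rule summable_norm[OF sn])
  also have "\<dots> \<le> (\<Sum>i. K * norm w ^ i)" by (rule suminf_le[OF gb sn sK])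
  also have "\<dots> = K / (1 - norm w)" using nw by (simp add: suminf_mult suminf_geometric)
  finally show ?thesis by (simp add: K_def)
qed


lemma fix_generic:
  fixes w :: complex
  assumes H: "\<forall>x\<in>\<rat>. l \<le> x \<and> x < l + 1 \<longrightarrow> (\<lambda>i. of_int (dg x i) * w^Suc i) sums of_real x"
    and nw: "norm w < 1" and y0: "l < y0" "y0 < l + 1" and gen: "\<forall>n. (TT^^Suc n) y0 \<noteq> l"
  shows "(\<Sum>i. of_int (dg y0 i) * w^Suc i) = of_real y0"
proof -
  let ?G = "\<lambda>y. \<Sum>i. of_int (dg y i) * w^Suc i"
  have le: "norm (?G y0 - of_real y0) < e" if e: "e > 0" for e
  proof -
    have "((\<lambda>k. 2*(\<beta>+2)*norm w ^ k / (1 - norm w)) \<longlongrightarrow> 2*(\<beta>+2)*0/(1 - norm w)) sequentially"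
      using nw by (intro tendsto_intros LIMSEQ_power_zero) auto
    hence "eventually (\<lambda>k. 2*(\<beta>+2)*norm w ^ k / (1 - norm w) < e/2) sequentially"
      using e by (intro order_tendstoD(2)) auto
    then obtain k where k: "2*(\<beta>+2)*norm w ^ k / (1 - norm w) < e/2"
      by (auto simp: eventually_sequentially)
    obtain d where d: "d > 0" "\<forall>y. y \<noteq> y0 \<and> dist y y0 < d \<longrightarrow> (\<forall>j<k. dg y j = dg y0 j)"
      using ev_all[OF gen, of k] unfolding eventually_at by auto
    define \<delta> where "\<delta> = min d (min (e/2) (l + 1 - y0))"
    have \<delta>: "\<delta> > 0" using d e y0 by (simp add: \<delta>_def)
    obtain x where x: "x \<in> \<rat>" "y0 < x" "x < y0 + \<delta>"
      using Rats_dense_in_real[of y0 "y0+\<delta>"] \<delta> by auto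
    have xr: "l \<le> x" "x < l + 1" using x y0 by (auto simp: \<delta>_def)
    have agree: "\<forall>j<k. dg y0 j = dg x j" using d(2) x by (auto simp: dist_real_def \<delta>_def)
    have Gx: "?G x = of_real x" using H x xr by (auto simp: sums_iff)
    have t: "norm (?G y0 - ?G x) \<le> 2*(\<beta>+2)*norm w ^ k / (1 - norm w)"
      by (rule tail[OF _ _ xr nw agree]) (use y0 in auto)
    have t2: "norm (?G x - of_real y0) = \<bar>x - y0\<bar>" using Gx by (simp add: flip: of_real_diff)
    have t3: "\<bar>x - y0\<bar> < e/2" using x by (auto simp: \<delta>_def)
    have "norm (?G y0 - of_real y0) \<le> norm (?G y0 - ?G x) + norm (?G x - of_real y0)"
      using norm_triangle_ineq[of "?G y0 - ?G x" "?G x - of_real y0"] by simp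
    thus ?thesis using t t2 t3 k by linarith
  qed
  show ?thesis
  proof (rule ccontr)
    assume "?G y0 \<noteq> of_real y0"
    hence "norm (?G y0 - of_real y0) > 0" by simp
    from le[OF this] show False by simp
  qed
qed

lemma conj_bound:
  assumes hyp: "\<forall>x\<in>\<rat>. l \<le> x \<and> x < l + 1 \<longrightarrow> eventually_periodic (dg x)"
    and z: "z \<in> conjugates \<beta>" "z \<noteq> complex_of_real \<beta>"
  shows "norm z \<le> 1"
proof (rule ccontr)
  assume "\<not> norm z \<le> 1" hence g1: "norm z > 1" by simp
  have z0: "z \<noteq> 0" using g1 by auto
  obtain p where p: "lead_coeff p = 1" "irreducible p" "poly (map_poly of_int p) (complex_of_real \<beta>) = 0"
     "poly (map_poly of_int p) z = 0"
    using z(1) unfolding conjugates_def by blast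
  define w where "w = - inverse z"
  have nw: "norm w < 1" using g1 by (simp add: w_def norm_inverse inverse_less_1_iff)
  have H: "\<forall>x\<in>\<rat>. l \<le> x \<and> x < l + 1 \<longrightarrow> (\<lambda>i. of_int (dg x i) * w^Suc i) sums of_real x"
    using sums_rat[OF hyp p g1] unfolding w_def by blast
  obtain y0 where y0: "0 < y0" "y0 < l + 1" "\<forall>n. (TT^^Suc n) y0 \<noteq> l" using generic_exists by blast
  define y1 where "y1 = TT y0"
  have gen1: "\<forall>n. (TT^^Suc n) y1 \<noteq> l"
  proof
    fix n
    have "(TT^^Suc n) y1 = (TT^^Suc (Suc n)) y0" unfolding y1_def by (simp only: funpow_Suc_right comp_def)
    thus "(TT^^Suc n) y1 \<noteq> l" using y0(3) by metis
  qed
  have "y1 \<noteq> l" using y0(3)[rule_format, of 0] by (simp add: y1_def)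
  hence y1r: "l < y1" "y1 < l + 1" using T_range[of y0] unfolding y1_def by auto
  have G0: "(\<Sum>i. of_int (dg y0 i) * w^Suc i) = of_real y0"
    by (rule fix_generic[OF H nw _ y0(2) y0(3)]) (use y0 l0 in linarith)
  have G1: "(\<Sum>i. of_int (dg y1 i) * w^Suc i) = of_real y1"
    by (rule fix_generic[OF H nw y1r gen1])
  have sm: "summable (\<lambda>i. of_int (dg y0 i) * w^Suc i)" by (rule summ) (use y0 l0 nw in auto)
  have s1: "summable (\<lambda>i. of_int (dg y1 i) * w^Suc i)" by (rule summ) (use y1r nw in auto)
  have sh: "dg y0 (Suc i) = dg y1 i" for i using dg_shift[of 1 y0 i] by (simp add: y1_def)
  have h1: "(\<Sum>i. of_int (dg y0 (Suc i)) * w^Suc (Suc i)) = of_real y0 - of_int (dg y0 0) * w"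
    using suminf_split_head[OF sm] G0 by simp
  have "(\<Sum>i. of_int (dg y0 (Suc i)) * w^Suc (Suc i)) = (\<Sum>i. w * (of_int (dg y1 i) * w^Suc i))"
    by (simp add: sh mult_ac)
  also have "\<dots> = w * of_real y1" using suminf_mult[OF s1, of w] G1 by simp
  finally have h2: "w * of_real y1 = of_real y0 - of_int (dg y0 0) * w" using h1 by simp
  have y1e: "y1 = -\<beta> * y0 - of_int (dg y0 0)" using T_step[of 0 y0] by (simp add: y1_def)
  have "complex_of_real y0 = w * of_real y1 + of_int (dg y0 0) * w" using h2 by simp
  also have "\<dots> = inverse z * (of_real \<beta> * of_real y0)" unfolding y1e w_def
    by (simp add: algebra_simps)
  finally have h3: "complex_of_real y0 = inverse z * (of_real \<beta> * of_real y0)" .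
  have "z * of_real y0 = z * (inverse z * (of_real \<beta> * of_real y0))" using h3 by simp
  also have "\<dots> = of_real \<beta> * of_real y0" using z0 by (simp add: mult.assoc[symmetric])
  finally have "z * of_real y0 = of_real \<beta> * of_real y0" .
  moreover have "complex_of_real y0 \<noteq> 0" using y0 by simp
  ultimately have "z = of_real \<beta>" by simp
  with z(2) show False by simp
qed

lemma alg_int:
  assumes hyp: "\<forall>x\<in>\<rat>. l \<le> x \<and> x < l + 1 \<longrightarrow> eventually_periodic (dg x)"
  shows "algebraic_int \<beta>"
proof -
  have "0 < l + 1" using l1 by simp
  then obtain n :: nat where n: "inverse (real (Suc n)) < l + 1" using reals_Archimedean by blast
  define b where "b = int (Suc n)"
  define x where "x = inverse (real (Suc n))"
  have pos: "0 < x" by (simp add: x_def)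
  have xr1: "x \<in> \<rat>" by (simp add: x_def)
  have xr2: "l \<le> x" using pos l0 by linarith
  have xr3: "x < l + 1" using n by (simp add: x_def)
  note xr = xr1 xr2 xr3
  obtain N q where q: "q > 0" "\<forall>n\<ge>N. dg x (n + q) = dg x n"
    using hyp xr unfolding eventually_periodic_def by blast
  have o: "(TT^^(N+q)) x = (TT^^N) x" by (rule orbit_periodic[OF xr(2,3) q]) simp
  have xb: "(of_real x :: real) = of_int 1 / of_int b" by (simp add: x_def b_def divide_inverse)
  have bne: "b \<noteq> 0" by (simp add: b_def)
  have Ueq: "U (dg x) x (N+q) \<beta> = U (dg x) x N \<beta>"
    using U_orbit[where 'a=real, of "N+q" x] U_orbit[where 'a=real, of N x] o by simp
  define P0 where "P0 = Qp 1 b (dg x) (N+q) - Qp 1 b (dg x) N"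
  define P where "P = smult ((-1)^(N+q)) P0"
  have Pz: "poly (map_poly of_int P) \<beta> = 0"
    by (simp add: P_def P0_def mp_smult mp_diff poly_Qp[OF xb bne] Ueq)
  have cN: "coeff P (N+q) = 1" using q(1) by (simp add: P_def P0_def Qp_def coeff_Ap)
  have cz: "\<forall>j>N+q. coeff P j = 0" by (simp add: P_def P0_def Qp_def coeff_Ap)
  have "degree P = N + q"
  proof (rule antisym)
    show "degree P \<le> N + q" by (rule degree_le[OF cz])
    show "N + q \<le> degree P" by (rule le_degree) (simp add: cN)
  qed
  hence "lead_coeff P = 1" using cN by simp
  thus ?thesis using Pz algebraic_int_altdef_ipoly by blast
qed

end

theorem mainTheorem8:
  fixes \<beta> l :: real
  assumes "\<beta> > 1" and "-1 < l" and "l \<le> 0"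
    and "\<forall>x \<in> \<rat>. l \<le> x \<and> x < l + 1 \<longrightarrow> eventually_periodic (negbeta_digits \<beta> l x)"
  shows "pisot \<beta> \<or> salem \<beta>"
proof -
  have ai: "algebraic_int \<beta>" by (rule alg_int[OF assms(1,2,3,4)])
  have cb: "\<forall>z\<in>conjugates \<beta> - {complex_of_real \<beta>}. cmod z \<le> 1"
    using conj_bound[OF assms(1,2,3,4)] by blast
  show ?thesis
  proof (cases "\<exists>z\<in>conjugates \<beta> - {complex_of_real \<beta>}. cmod z = 1")
    case True thus ?thesis using ai cb assms(1) unfolding salem_def by blast
  next
    case False
    have "\<forall>z\<in>conjugates \<beta> - {complex_of_real \<beta>}. cmod z < 1"
    proof
      fix z assume zz: "z \<in> conjugates \<beta> - {complex_of_real \<beta>}"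
      have "cmod z \<le> 1" using cb zz by blast
      moreover have "cmod z \<noteq> 1" using False zz by blast
      ultimately show "cmod z < 1" by simp
    qed
    thus ?thesis using ai assms(1) unfolding pisot_def by blast
  qed
qed

end
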